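(* Let $X_1,X_2,\dots$ be iid with $P(X_1>u)=\exp(-\int_0^u h(v)dv)$ for all $u>u_0$, where $u_0\ge0$ and $h$ is a positive, continuous, strictly increasing function with $h(v)\to\infty$. Let $S_k=X_1+\dots+X_k$, $\lambda>0$, $b>0$, $\psi(s)=h^{-1}\big(\tfrac4b\log s\big)$ (defined for $s$ large), $g(k,u)=u-\psi(k)$ and $a_k=\max\{1-2\log k/k,0\}$. Then there exist an index $k_0$ and a constant $C$ such that for all $k>k_0$ and $u>0$, $$\frac{\frac{\lambda^k}{k!}P\big(S_k>u+ba_k,\ S_{k-1}\le g(k,u)\big)}{\frac{\lambda^{k+1}}{(k+1)!}P(S_{k+1}>u+b)}\le\frac{C}{\lambda k}.$$ *)

theory Defs
  imports "HOL-Probability.Probability"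
begin

definition psi_fun :: "(real \<Rightarrow> real) \<Rightarrow> real \<Rightarrow> real \<Rightarrow> real" where
  "psi_fun h b s = inv_into {0..} h (4 / b * ln s)"

definition g_fun :: "(real \<Rightarrow> real) \<Rightarrow> real \<Rightarrow> nat \<Rightarrow> real \<Rightarrow> real" where
  "g_fun h b k u = u - psi_fun h b (real k)"

definition a_seq :: "nat \<Rightarrow> real" where
  "a_seq k = max (1 - 2 * ln (real k) / real k) 0"

end

theory Submission
  imports Defs
begin


lemma (in prob_space) fubini_cmp:
  fixes Z Y :: "'a \<Rightarrow> real"
  assumes ind: "indep_var borel Z borel Y"
    and cmp: "\<And>s. s \<le> c \<Longrightarrow> prob {\<omega>\<in>space M. Z \<omega> > u + d - s} \<le> K * prob {\<omega>\<in>space M. Z \<omega> > u - s}"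
    and K: "K \<ge> 0"
  shows "prob {\<omega>\<in>space M. Y \<omega> \<le> c \<and> Y \<omega> + Z \<omega> > u + d}
         \<le> K * prob {\<omega>\<in>space M. Y \<omega> \<le> c \<and> Y \<omega> + Z \<omega> > u}"
proof -
  have rv[measurable]: "Z \<in> borel_measurable M" "Y \<in> borel_measurable M"
    using ind indep_var_rv1 indep_var_rv2 by blast+
  let ?LZ = "distr M borel Z" let ?NY = "distr M borel Y"
  interpret Z: prob_space ?LZ by (rule prob_space_distr) (rule rv)
  interpret Y: prob_space ?NY by (rule prob_space_distr) (rule rv)
  interpret P: pair_prob_space ?LZ ?NY ..
  have joint: "?LZ \<Otimes>\<^sub>M ?NY = distr M (borel \<Otimes>\<^sub>M borel) (\<lambda>x. (Z x, Y x))"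
    using ind by (simp add: indep_var_distribution_eq)
  have key: "emeasure M {\<omega>\<in>space M. Y \<omega> \<le> c \<and> Y \<omega> + Z \<omega> > u + e}
     = (\<integral>\<^sup>+ s. indicator {..c} s * emeasure M {\<omega>\<in>space M. Z \<omega> > u + e - s} \<partial>?NY)" for e
  proof -
    define E where "E = {p \<in> space (borel \<Otimes>\<^sub>M borel). snd p \<le> c \<and> snd p + fst p > u + (e::real)}"
    have Em: "E \<in> sets (borel \<Otimes>\<^sub>M borel)" unfolding E_def by measurable
    have "emeasure M {\<omega>\<in>space M. Y \<omega> \<le> c \<and> Y \<omega> + Z \<omega> > u + e}
        = emeasure (distr M (borel \<Otimes>\<^sub>M borel) (\<lambda>x. (Z x, Y x))) E"
      by (subst emeasure_distr[OF _ Em]) (auto simp: E_def space_pair_measure intro!: arg_cong[where f="emeasure M"])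
    also have "\<dots> = emeasure (?LZ \<Otimes>\<^sub>M ?NY) E" by (simp add: joint)
    also have "\<dots> = (\<integral>\<^sup>+ s. emeasure ?LZ ((\<lambda>x. (x, s)) -` E) \<partial>?NY)"
      by (rule P.emeasure_pair_measure_alt2) (simp add: Em)
    also have "\<dots> = (\<integral>\<^sup>+ s. indicator {..c} s * emeasure M {\<omega>\<in>space M. Z \<omega> > u + e - s} \<partial>?NY)"
    proof (rule nn_integral_cong)
      fix s assume "s \<in> space ?NY"
      show "emeasure ?LZ ((\<lambda>x. (x, s)) -` E) = indicator {..c} s * emeasure M {\<omega>\<in>space M. Z \<omega> > u + e - s}"
      proof (cases "s \<le> c")
        case True
        have "(\<lambda>x. (x, s)) -` E = {u + e - s<..}" using True by (auto simp: E_def space_pair_measure)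
        then show ?thesis using True
          by (simp add: emeasure_distr vimage_def Int_def conj_commute)
      next
        case False
        have "(\<lambda>x. (x, s)) -` E = {}" using False by (auto simp: E_def space_pair_measure)
        then show ?thesis using False by simp
      qed
    qed
    finally show ?thesis .
  qed
  have "emeasure M {\<omega>\<in>space M. Y \<omega> \<le> c \<and> Y \<omega> + Z \<omega> > u + d}
     \<le> (\<integral>\<^sup>+ s. ennreal K * (indicator {..c} s * emeasure M {\<omega>\<in>space M. Z \<omega> > u + 0 - s}) \<partial>?NY)"
    unfolding key
  proof (rule nn_integral_mono)
    fix s assume "s \<in> space ?NY"
    show "indicator {..c} s * emeasure M {\<omega>\<in>space M. Z \<omega> > u + d - s}
      \<le> ennreal K * (indicator {..c} s * emeasure M {\<omega>\<in>space M. Z \<omega> > u + 0 - s})"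
    proof (cases "s \<le> c")
      case True
      have "ennreal (prob {\<omega>\<in>space M. Z \<omega> > u + d - s}) \<le> ennreal (K * prob {\<omega>\<in>space M. Z \<omega> > u - s})"
        using cmp[OF True] by (simp add: ennreal_leI)
      then show ?thesis using True K
        by (simp add: emeasure_eq_measure ennreal_mult)
    qed simp
  qed
  also have "\<dots> = ennreal K * emeasure M {\<omega>\<in>space M. Y \<omega> \<le> c \<and> Y \<omega> + Z \<omega> > u + 0}"
    unfolding key by (rule nn_integral_cmult) measurable
  finally have "ennreal (prob {\<omega>\<in>space M. Y \<omega> \<le> c \<and> Y \<omega> + Z \<omega> > u + d})
      \<le> ennreal (K * prob {\<omega>\<in>space M. Y \<omega> \<le> c \<and> Y \<omega> + Z \<omega> > u})"
    using K by (simp add: emeasure_eq_measure ennreal_mult)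
  then show ?thesis using K by (simp add: ennreal_le_iff)
qed

lemma (in prob_space) indep_prod_events:
  fixes Z Y :: "'a \<Rightarrow> real"
  assumes ind: "indep_var borel Z borel Y"
  shows "prob {\<omega>\<in>space M. Z \<omega> > b \<and> Y \<omega> > u} = prob {\<omega>\<in>space M. Z \<omega> > b} * prob {\<omega>\<in>space M. Y \<omega> > u}"
proof -
  have "prob ((\<lambda>x. (Z x, Y x)) -` ({b<..} \<times> {u<..}) \<inter> space M) =
    prob (Z -` {b<..} \<inter> space M) * prob (Y -` {u<..} \<inter> space M)"
    by (rule indep_varD[OF ind]) auto
  moreover have "(\<lambda>x. (Z x, Y x)) -` ({b<..} \<times> {u<..}) \<inter> space M = {\<omega>\<in>space M. Z \<omega> > b \<and> Y \<omega> > u}" by auto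
  moreover have "Z -` {b<..} \<inter> space M = {\<omega>\<in>space M. Z \<omega> > b}" by auto
  moreover have "Y -` {u<..} \<inter> space M = {\<omega>\<in>space M. Y \<omega> > u}" by auto
  ultimately show ?thesis by simp
qed



lemma H_step:
  fixes h :: "real \<Rightarrow> real"
  assumes cont: "continuous_on {0..} h" and mono: "strict_mono_on {0..} h"
    and t: "0 \<le> t" and d: "0 \<le> d"
  shows "integral {0..t+d} h \<ge> integral {0..t} h + d * h t"
proof -
  have ci: "continuous_on {0..t+d} h" using cont by (rule continuous_on_subset) auto
  have int: "h integrable_on {0..t+d}" using ci by (rule integrable_continuous_interval)
  have "integral {0..t} h + integral {t..t+d} h = integral {0..t+d} h"
    using Henstock_Kurzweil_Integration.integral_combine[where a=0 and c=t and b="t+d" and f=h] t d int by simp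
  moreover have "integral {t..t+d} h \<ge> integral {t..t+d} (\<lambda>_. h t)"
  proof (rule integral_le)
    show "h integrable_on {t..t+d}"
      using int by (rule integrable_on_subinterval) (use t in auto)
    show "(\<lambda>_. h t) integrable_on {t..t+d}" by (intro integrable_continuous_interval continuous_on_const)
    fix x assume "x \<in> {t..t+d}"
    then have tx: "t \<le> x" by simp
    show "h t \<le> h x"
    proof (cases "t = x")
      case False
      then have "t < x" using tx by simp
      then show ?thesis using strict_mono_onD[OF mono, of t x] t tx by simp
    qed simp
  qed
  moreover have "integral {t..t+d} (\<lambda>_. h t) = d * h t" using d by (simp add: content_real)
  ultimately show ?thesis by linarith
qed

lemma psi_prop:
  fixes h :: "real \<Rightarrow> real"
  assumes cont: "continuous_on {0..} h" and mono: "strict_mono_on {0..} h"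
    and lim: "filterlim h at_top at_top" and y: "h 0 \<le> y"
  shows "inv_into {0..} h y \<ge> 0 \<and> h (inv_into {0..} h y) = y"
proof -
  obtain N where N: "\<And>x. x \<ge> N \<Longrightarrow> h x \<ge> y"
    using lim unfolding filterlim_at_top eventually_at_top_linorder by blast
  define B where "B = max N 0"
  have "\<exists>x\<ge>0. x \<le> B \<and> h x = y"
    using IVT'[of h 0 y B] y N[of B] continuous_on_subset[OF cont, of "{0..B}"] by (auto simp: B_def)
  then have "y \<in> h ` {0..}" by auto
  then have "inv_into {0..} h y \<in> {0..}" by (rule inv_into_into)
  then show ?thesis using \<open>y \<in> h ` {0..}\<close> by (auto intro: f_inv_into_f)
qed

lemma ak_half:
  fixes k :: nat assumes "k \<ge> 64" shows "a_seq k \<ge> 1/2"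
proof -
  have kpos: "real k \<ge> 64" using assms by simp
  have s8: "sqrt (real k) \<ge> 8" using kpos real_sqrt_le_mono[of 64 "real k"] by simp
  have "ln (real k) = 2 * ln (sqrt (real k))" using kpos by (simp add: ln_sqrt)
  also have "\<dots> \<le> 2 * sqrt (real k)" using ln_le_minus_one[of "sqrt (real k)"] kpos by simp
  also have "\<dots> \<le> sqrt (real k) * sqrt (real k) / 4" using mult_right_mono[OF s8, of "sqrt (real k)"] s8 by simp
  also have "\<dots> = real k / 4" using kpos by simp
  finally have "ln (real k) \<le> real k / 4" .
  then have "2 * ln (real k) / real k \<le> 1/2" using kpos by (simp add: divide_simps)
  then show ?thesis unfolding a_seq_def by linarith
qed



lemma final_arith:
  fixes lam PA PB PS c0 :: real and k :: nat
  assumes lam: "lam > 0" and c0: "c0 > 0" and k: "k \<ge> 1" and PA: "PA \<ge> 0" and PS: "PS \<ge> 0"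
    and h1: "PA \<le> PS / (real k)^2" and h2: "c0 * PS \<le> PB"
  shows "(lam^k/fact k * PA)/(lam^(k+1)/fact(k+1) * PB) \<le> (2/c0)/(lam * real k)"
proof (cases "PB = 0")
  case True
  then have "PS = 0" using h2 PS c0 by (metis mult_le_0_iff linorder_not_le order_antisym)
  then have "PA = 0" using h1 PA by simp
  then show ?thesis using lam c0 by simp
next
  case False
  have PBp: "PB > 0" proof - have "c0 * PS \<ge> 0" using PS c0 by simp then show ?thesis using False h2 by linarith qed
  have kp: "real k > 0" using k by simp
  have q: "lam^k/fact k > 0" using lam by simp
  have eq: "(lam^k/fact k * PA)/(lam^(k+1)/fact(k+1) * PB) = (real k + 1) / lam * (PA / PB)"
    using lam PBp by (simp add: field_simps)
  have "PA / PB \<le> (PS / (real k)^2) / PB" using h1 PBp by (intro divide_right_mono) auto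
  also have "\<dots> \<le> (PB / c0 / (real k)^2) / PB"
    using h2 c0 PBp kp by (intro divide_right_mono) (auto simp: field_simps)
  also have "\<dots> = 1 / (c0 * (real k)^2)" using PBp by (simp add: field_simps)
  finally have r: "PA / PB \<le> 1 / (c0 * (real k)^2)" .
  have "(real k + 1) / lam * (PA / PB) \<le> (real k + 1) / lam * (1 / (c0 * (real k)^2))"
    using r lam by (intro mult_left_mono) auto
  also have "\<dots> \<le> (2 * real k) / lam * (1 / (c0 * (real k)^2))"
    using lam c0 kp k by (intro mult_right_mono divide_right_mono) auto
  also have "\<dots> = (2/c0)/(lam * real k)" using kp by (simp add: field_simps power2_eq_square)
  finally show ?thesis using eq by simp
qed


theorem lemma8:
  fixes M :: "'a measure" and X :: "nat \<Rightarrow> 'a \<Rightarrow> real"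
    and h :: "real \<Rightarrow> real" and u0 lam b :: real
  assumes "prob_space M"
    and "\<And>i. X i \<in> borel_measurable M"
    and "prob_space.indep_vars M (\<lambda>_. borel) X UNIV"
    and "\<And>i. distr M borel (X i) = distr M borel (X 0)"
    and "u0 \<ge> 0"
    and "\<And>v. v \<ge> 0 \<Longrightarrow> h v > 0"
    and "continuous_on {0..} h"
    and "strict_mono_on {0..} h"
    and "filterlim h at_top at_top"
    and "\<And>u. u > u0 \<Longrightarrow>
           measure M {\<omega> \<in> space M. X 0 \<omega> > u} = exp (- integral {0..u} h)"
    and "lam > 0" and "b > 0"
  shows "\<exists>(k0::nat) (C::real). \<forall>k u. k > k0 \<longrightarrow> u > 0 \<longrightarrow>
     (lam ^ k / fact k *
        measure M {\<omega> \<in> space M. (\<Sum>i<k. X i \<omega>) > u + b * a_seq k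
                                \<and> (\<Sum>i<k - 1. X i \<omega>) \<le> g_fun h b k u})
     / (lam ^ (k + 1) / fact (k + 1) *
        measure M {\<omega> \<in> space M. (\<Sum>i<k + 1. X i \<omega>) > u + b})
     \<le> C / (lam * real k)"
proof -
  interpret prob_space M by (rule assms(1))
  note meas[measurable] = assms(2)
  have mono: "\<And>x y. 0 \<le> x \<Longrightarrow> x \<le> y \<Longrightarrow> h x \<le> h y"
  proof -
    fix x y :: real assume xy: "0 \<le> x" "x \<le> y"
    show "h x \<le> h y"
    proof (cases "x = y")
      case False
      then have "x < y" using xy by simp
      then show ?thesis using strict_mono_onD[OF assms(8), of x y] xy by simp
    qed simp
  qed
  have same: "prob {\<omega>\<in>space M. X j \<omega> > t} = prob {\<omega>\<in>space M. X 0 \<omega> > t}" for j t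
  proof -
    have "prob {\<omega>\<in>space M. X j \<omega> > t} = measure (distr M borel (X j)) {t<..}"
      by (subst measure_distr) (auto intro!: arg_cong[where f=prob])
    also have "\<dots> = measure (distr M borel (X 0)) {t<..}" by (simp only: assms(4)[of j])
    also have "\<dots> = prob {\<omega>\<in>space M. X 0 \<omega> > t}"
      by (subst measure_distr) (auto intro!: arg_cong[where f=prob])
    finally show ?thesis .
  qed
  have tail: "prob {\<omega>\<in>space M. X j \<omega> > t} = exp (- integral {0..t} h)" if "t > u0" for j t
    by (subst same) (rule assms(10)[OF that])
  define c0 where "c0 = prob {\<omega>\<in>space M. X 0 \<omega> > b}"
  have c0pos: "c0 > 0"
  proof -
    have "prob {\<omega>\<in>space M. X 0 \<omega> > b + u0} \<le> c0"
      unfolding c0_def using assms(5) by (intro finite_measure_mono) auto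
    moreover have "prob {\<omega>\<in>space M. X 0 \<omega> > b + u0} > 0"
      using tail[of "b + u0" 0] assms(12) by simp
    ultimately show ?thesis by linarith
  qed
  define k0 :: nat where "k0 = nat \<lceil>exp (b * h u0 / 4)\<rceil> + 64"
  show ?thesis
  proof (rule exI[of _ k0], rule exI[of _ "2 / c0"], intro allI impI)
    fix k :: nat and u :: real assume k: "k0 < k" and u: "0 < u"
    have k64: "k \<ge> 64" using k k0_def by simp
    have kpos: "real k > 0" using k64 by simp
    have "real k > exp (b * h u0 / 4)"
    proof -
      have "exp (b * h u0 / 4) \<le> real (nat \<lceil>exp (b * h u0 / 4)\<rceil>)" by (rule real_nat_ceiling_ge)
      also have "nat \<lceil>exp (b * h u0 / 4)\<rceil> < k" using k unfolding k0_def by linarith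
      then have "real (nat \<lceil>exp (b * h u0 / 4)\<rceil>) < real k" by (simp only: of_nat_less_iff)
      finally show ?thesis .
    qed
    then have "ln (real k) > b * h u0 / 4"
      using ln_less_cancel_iff[of "exp (b * h u0 / 4)" "real k"] kpos by simp
    then have lnk: "4 / b * ln (real k) > h u0" using assms(12) by (simp add: field_simps)
    have lnk0: "ln (real k) \<ge> 0" using k64 by simp
    have hu0: "h 0 \<le> h u0" using mono[of 0 u0] assms(5) by simp
    define p where "p = psi_fun h b (real k)"
    have pp: "p \<ge> 0 \<and> h p = 4 / b * ln (real k)"
      unfolding p_def psi_fun_def using psi_prop[OF assms(7) assms(8) assms(9)] lnk hu0 by simp
    have pu0: "p > u0"
    proof (rule ccontr)
      assume "\<not> p > u0"
      then have "h p \<le> h u0" using mono[of p u0] pp by simp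
      then show False using pp lnk by simp
    qed
    define a where "a = a_seq k"
    have a: "a \<ge> 1/2" unfolding a_def using ak_half[OF k64] .
    define K where "K = 1 / (real k)^2"
    have K0: "K \<ge> 0" unfolding K_def by simp
    have expK: "exp (- (2 * ln (real k))) = K"
    proof -
      have "exp (2 * ln (real k)) = exp (ln (real k)) * exp (ln (real k))"
        by (simp only: mult_2 exp_add)
      also have "\<dots> = (real k)^2" using kpos by (simp add: power2_eq_square)
      finally have e: "exp (2 * ln (real k)) = (real k)^2" .
      have "exp (- (2 * ln (real k))) = inverse (exp (2 * ln (real k)))" by (rule exp_minus)
      then show ?thesis unfolding K_def e by (simp add: inverse_eq_divide)
    qed
    have cmp: "prob {\<omega>\<in>space M. X (k-1) \<omega> > u + b * a - s} \<le> K * prob {\<omega>\<in>space M. X (k-1) \<omega> > u - s}"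
      if s: "s \<le> u - p" for s
    proof -
      define t where "t = u - s"
      have t: "t \<ge> p" using s t_def by simp
      have tu0: "t > u0" using t pu0 by simp
      have ba: "b * a \<ge> 0" using a assms(12) by simp
      have e1: "u + b * a - s = t + b * a" unfolding t_def by simp
      have "prob {\<omega>\<in>space M. X (k-1) \<omega> > u + b * a - s} = exp (- integral {0..t + b*a} h)"
        unfolding e1 using tail[of "t + b*a" "k-1"] tu0 ba by simp
      also have "\<dots> \<le> exp (- (integral {0..t} h + b * a * h t))"
        using H_step[OF assms(7) assms(8), of t "b*a"] tu0 assms(5) ba by simp
      also have "\<dots> = exp (- integral {0..t} h) * exp (- (b * a * h t))"
        by (simp add: exp_add[symmetric])
      also have "\<dots> \<le> exp (- integral {0..t} h) * exp (- (2 * ln (real k)))"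
      proof -
        have "h t \<ge> h p" using mono[of p t] pp t by simp
        then have "b * a * h t \<ge> b * a * (4 / b * ln (real k))" using pp ba by (intro mult_left_mono) auto
        moreover have "b * a * (4 / b * ln (real k)) = 4 * a * ln (real k)" using assms(12) by simp
        moreover have "4 * a * ln (real k) \<ge> 2 * ln (real k)" using mult_right_mono[of 2 "4*a" "ln (real k)"] a lnk0 by simp
        ultimately have "b * a * h t \<ge> 2 * ln (real k)" by linarith
        then show ?thesis by (intro mult_left_mono) auto
      qed
      also have "\<dots> = K * prob {\<omega>\<in>space M. X (k-1) \<omega> > u - s}"
        using tail[of t "k-1"] tu0 expK unfolding t_def by simp
      finally show ?thesis .
    qed
    have ind1: "indep_var borel (X (k-1)) borel (\<lambda>\<omega>. \<Sum>i\<in>{..<k-1}. X i \<omega>)"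
      by (rule indep_vars_sum) (auto intro: indep_vars_subset[OF assms(3)])
    have ind2: "indep_var borel (X k) borel (\<lambda>\<omega>. \<Sum>i\<in>{..<k}. X i \<omega>)"
      by (rule indep_vars_sum) (auto intro: indep_vars_subset[OF assms(3)])
    have P1: "prob {\<omega>\<in>space M. (\<Sum>i\<in>{..<k-1}. X i \<omega>) \<le> u - p \<and> (\<Sum>i\<in>{..<k-1}. X i \<omega>) + X (k-1) \<omega> > u + b * a}
       \<le> K * prob {\<omega>\<in>space M. (\<Sum>i\<in>{..<k-1}. X i \<omega>) \<le> u - p \<and> (\<Sum>i\<in>{..<k-1}. X i \<omega>) + X (k-1) \<omega> > u}"
      by (rule fubini_cmp[OF ind1 cmp K0])
    have ksuc: "k = Suc (k - 1)" using k64 by simp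
    have sumk: "(\<Sum>i<k. X i \<omega>) = (\<Sum>i\<in>{..<k-1}. X i \<omega>) + X (k-1) \<omega>" for \<omega>
      by (subst ksuc) (simp del: Suc_pred' add: sum.lessThan_Suc)
    define PA where "PA = measure M {\<omega> \<in> space M. (\<Sum>i<k. X i \<omega>) > u + b * a_seq k
                                \<and> (\<Sum>i<k - 1. X i \<omega>) \<le> g_fun h b k u}"
    define PB where "PB = measure M {\<omega> \<in> space M. (\<Sum>i<k + 1. X i \<omega>) > u + b}"
    define PS where "PS = prob {\<omega>\<in>space M. (\<Sum>i\<in>{..<k}. X i \<omega>) > u}"
    have "PA = prob {\<omega>\<in>space M. (\<Sum>i\<in>{..<k-1}. X i \<omega>) \<le> u - p \<and> (\<Sum>i\<in>{..<k-1}. X i \<omega>) + X (k-1) \<omega> > u + b * a}"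
      unfolding PA_def g_fun_def p_def a_def sumk by (intro arg_cong[where f=prob] Collect_cong) auto
    also have "\<dots> \<le> K * PS"
    proof -
      have "prob {\<omega>\<in>space M. (\<Sum>i\<in>{..<k-1}. X i \<omega>) \<le> u - p \<and> (\<Sum>i\<in>{..<k-1}. X i \<omega>) + X (k-1) \<omega> > u} \<le> PS"
        unfolding PS_def sumk by (rule finite_measure_mono) (fastforce, measurable)
      then have "K * prob {\<omega>\<in>space M. (\<Sum>i\<in>{..<k-1}. X i \<omega>) \<le> u - p \<and> (\<Sum>i\<in>{..<k-1}. X i \<omega>) + X (k-1) \<omega> > u} \<le> K * PS"
        using K0 by (rule mult_left_mono)
      then show ?thesis using P1 by linarith
    qed
    finally have hA: "PA \<le> PS / (real k)^2" unfolding K_def by simp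
    have "c0 * PS = prob {\<omega>\<in>space M. X k \<omega> > b \<and> (\<Sum>i\<in>{..<k}. X i \<omega>) > u}"
    proof -
      have "prob {\<omega>\<in>space M. X k \<omega> > b} = c0" unfolding c0_def by (rule same)
      then show ?thesis unfolding PS_def using indep_prod_events[OF ind2] by simp
    qed
    also have "\<dots> \<le> PB"
    proof -
      have sk1: "(\<Sum>i<k + 1. X i \<omega>) = X k \<omega> + (\<Sum>i\<in>{..<k}. X i \<omega>)" for \<omega>
        unfolding Suc_eq_plus1[symmetric] by simp
      show ?thesis unfolding PB_def sk1 by (rule finite_measure_mono) (fastforce, measurable)
    qed
    finally have hB: "c0 * PS \<le> PB" .
    have fin: "(lam ^ k / fact k * PA) / (lam ^ (k + 1) / fact (k + 1) * PB) \<le> (2 / c0) / (lam * real k)"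
    proof (rule final_arith[OF assms(11) c0pos _ _ _ hA hB])
      show "1 \<le> k" using k64 by simp
      show "0 \<le> PA" unfolding PA_def by (rule measure_nonneg)
      show "0 \<le> PS" unfolding PS_def by (rule measure_nonneg)
    qed
    from fin show "(lam ^ k / fact k *
        measure M {\<omega> \<in> space M. (\<Sum>i<k. X i \<omega>) > u + b * a_seq k
                                \<and> (\<Sum>i<k - 1. X i \<omega>) \<le> g_fun h b k u})
     / (lam ^ (k + 1) / fact (k + 1) *
        measure M {\<omega> \<in> space M. (\<Sum>i<k + 1. X i \<omega>) > u + b})
     \<le> (2 / c0) / (lam * real k)" unfolding PA_def PB_def .
  qed
qed

end
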